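(* Let $\pi_3$ be the five-dimensional complex associative algebra with basis $e_1,\dots,e_5$ and nonzero products $e_1e_1=e_2$, $e_1e_2=e_2e_1=e_3$, $e_1e_4=e_5$, $e_4e_4=e_5$ (all other products of basis elements are zero). The vector space $LocDer(\pi_3)$ of all local derivations of $\pi_3$ is a Lie algebra with respect to the bracket $[\nabla,\Delta]=\nabla\Delta-\Delta\nabla$; that is, $[\nabla,\Delta]\in LocDer(\pi_3)$ for all $\nabla,\Delta\in LocDer(\pi_3)$.
   Context: A derivation of an algebra $A$ is a linear map $D$ with $D(xy)=D(x)y+xD(y)$ for all $x,y\in A$. A linear map $\nabla:A\to A$ is a local derivation if for every $x\in A$ there is a derivation $D_x$ of $A$ (depending on $x$) with $\nabla(x)=D_x(x)$. *)

theory Defs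
  imports Complex_Main
begin

datatype basis = E1 | E2 | E3 | E4 | E5

type_synonym pi3 = "basis \<Rightarrow> complex"

text \<open>Multiplication of pi3, extended bilinearly from
 e1e1 = e2, e1e2 = e2e1 = e3, e1e4 = e5, e4e4 = e5 (other products of basis elements zero).\<close>

definition pi3_mult :: "pi3 \<Rightarrow> pi3 \<Rightarrow> pi3" where
  "pi3_mult x y = (\<lambda>i. case i of
       E1 \<Rightarrow> 0
     | E2 \<Rightarrow> x E1 * y E1
     | E3 \<Rightarrow> x E1 * y E2 + x E2 * y E1
     | E4 \<Rightarrow> 0
     | E5 \<Rightarrow> x E1 * y E4 + x E4 * y E4)"

definition pi3_linear :: "(pi3 \<Rightarrow> pi3) \<Rightarrow> bool" where
  "pi3_linear f \<longleftrightarrow>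
     (\<forall>x y. f (\<lambda>i. x i + y i) = (\<lambda>i. f x i + f y i)) \<and>
     (\<forall>(c::complex) x. f (\<lambda>i. c * x i) = (\<lambda>i. c * f x i))"

definition pi3_derivation :: "(pi3 \<Rightarrow> pi3) \<Rightarrow> bool" where
  "pi3_derivation D \<longleftrightarrow> pi3_linear D \<and>
     (\<forall>x y. D (pi3_mult x y) = (\<lambda>i. pi3_mult (D x) y i + pi3_mult x (D y) i))"

definition pi3_local_derivation :: "(pi3 \<Rightarrow> pi3) \<Rightarrow> bool" where
  "pi3_local_derivation N \<longleftrightarrow> pi3_linear N \<and>
     (\<forall>x. \<exists>D. pi3_derivation D \<and> N x = D x)"

definition pi3_bracket :: "(pi3 \<Rightarrow> pi3) \<Rightarrow> (pi3 \<Rightarrow> pi3) \<Rightarrow> (pi3 \<Rightarrow> pi3)" where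
  "pi3_bracket N M = (\<lambda>x i. N (M x) i - M (N x) i)"

end

theory Submission
  imports Defs
begin

definition ev :: "basis \<Rightarrow> pi3" where
  "ev k = (\<lambda>i. if i = k then 1 else 0)"

lemma ev_apply: "ev k j = (if j = k then 1 else 0)"
  by (simp add: ev_def)

lemma lin_add: "pi3_linear f \<Longrightarrow> f (\<lambda>i. x i + y i) = (\<lambda>i. f x i + f y i)"
  unfolding pi3_linear_def by blast

lemma lin_smul: "pi3_linear f \<Longrightarrow> f (\<lambda>i. c * x i) = (\<lambda>i. c * f x i)"
  unfolding pi3_linear_def by blast

lemma lin_expand:
  assumes "pi3_linear f"
  shows "f x j = x E1 * f (ev E1) j + (x E2 * f (ev E2) j + (x E3 * f (ev E3) j
           + (x E4 * f (ev E4) j + x E5 * f (ev E5) j)))"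
proof -
  have "x = (\<lambda>i. x E1 * ev E1 i + (x E2 * ev E2 i + (x E3 * ev E3 i
           + (x E4 * ev E4 i + x E5 * ev E5 i))))"
    by (rule ext, case_tac i, simp_all add: ev_def)
  hence "f x j = f (\<lambda>i. x E1 * ev E1 i + (x E2 * ev E2 i + (x E3 * ev E3 i
           + (x E4 * ev E4 i + x E5 * ev E5 i)))) j" by simp
  thus ?thesis by (simp add: lin_add[OF assms] lin_smul[OF assms])
qed

lemma lin_zero: assumes "pi3_linear f" shows "f (\<lambda>i. 0) = (\<lambda>i. 0)"
proof -
  have "f (\<lambda>i. 0 * ev E1 i) = (\<lambda>i. 0 * f (ev E1) i)" by (rule lin_smul[OF assms])
  thus ?thesis by simp
qed

lemma der_formula:
  assumes "pi3_derivation D"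
  shows "D x E1 = D (ev E1) E1 * x E1 \<and>
         D x E2 = D (ev E1) E2 * x E1 + 2 * D (ev E1) E1 * x E2 \<and>
         D x E3 = D (ev E1) E3 * x E1 + 2 * D (ev E1) E2 * x E2 + 3 * D (ev E1) E1 * x E3
                  + D (ev E4) E3 * x E4 \<and>
         D x E4 = D (ev E1) E1 * x E4 \<and>
         D x E5 = D (ev E1) E5 * x E1 + D (ev E4) E5 * x E4 + 2 * D (ev E1) E1 * x E5"
proof -
  have lin: "pi3_linear D" and mul: "\<And>x y. D (pi3_mult x y) = (\<lambda>i. pi3_mult (D x) y i + pi3_mult x (D y) i)"
    using assms unfolding pi3_derivation_def by auto
  have m11: "pi3_mult (ev E1) (ev E1) = ev E2" by (simp add: fun_eq_iff ev_def pi3_mult_def split: basis.split)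
  have m12: "pi3_mult (ev E1) (ev E2) = ev E3" by (simp add: fun_eq_iff ev_def pi3_mult_def split: basis.split)
  have m14: "pi3_mult (ev E1) (ev E4) = ev E5" by (simp add: fun_eq_iff ev_def pi3_mult_def split: basis.split)
  have m44: "pi3_mult (ev E4) (ev E4) = ev E5" by (simp add: fun_eq_iff ev_def pi3_mult_def split: basis.split)
  have m41: "pi3_mult (ev E4) (ev E1) = (\<lambda>i. 0)" by (simp add: fun_eq_iff ev_def pi3_mult_def split: basis.split)
  have d2: "D (ev E2) = (\<lambda>i. pi3_mult (D (ev E1)) (ev E1) i + pi3_mult (ev E1) (D (ev E1)) i)"
    using mul[of "ev E1" "ev E1"] m11 by simp
  have d3: "D (ev E3) = (\<lambda>i. pi3_mult (D (ev E1)) (ev E2) i + pi3_mult (ev E1) (D (ev E2)) i)"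
    using mul[of "ev E1" "ev E2"] m12 by simp
  have d5a: "D (ev E5) = (\<lambda>i. pi3_mult (D (ev E1)) (ev E4) i + pi3_mult (ev E1) (D (ev E4)) i)"
    using mul[of "ev E1" "ev E4"] m14 by simp
  have d5b: "D (ev E5) = (\<lambda>i. pi3_mult (D (ev E4)) (ev E4) i + pi3_mult (ev E4) (D (ev E4)) i)"
    using mul[of "ev E4" "ev E4"] m44 by simp
  have d0: "(\<lambda>i. 0) = (\<lambda>i. pi3_mult (D (ev E4)) (ev E1) i + pi3_mult (ev E4) (D (ev E1)) i)"
    using mul[of "ev E4" "ev E1"] m41 lin_zero[OF lin] by simp
  have z: "D (ev E4) E1 = 0 \<and> D (ev E4) E2 = 0 \<and> D (ev E1) E4 = 0"
    using fun_cong[OF d0, of E2] fun_cong[OF d0, of E3] fun_cong[OF d0, of E5]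
    by (simp add: pi3_mult_def ev_def)
  have b4: "D (ev E4) E4 = D (ev E1) E1"
    using fun_cong[OF d5a, of E5] fun_cong[OF d5b, of E5] z by (simp add: pi3_mult_def ev_def)
  have v2: "\<And>j. D (ev E2) j = (case j of E1 \<Rightarrow> 0 | E2 \<Rightarrow> 2 * D (ev E1) E1 | E3 \<Rightarrow> 2 * D (ev E1) E2
       | E4 \<Rightarrow> 0 | E5 \<Rightarrow> 0)"
    using d2 z by (case_tac j, simp_all add: pi3_mult_def ev_def)
  have v3: "\<And>j. D (ev E3) j = (case j of E3 \<Rightarrow> 3 * D (ev E1) E1 | _ \<Rightarrow> 0)"
    using d3 z v2 by (case_tac j, simp_all add: pi3_mult_def ev_def)
  have v5: "\<And>j. D (ev E5) j = (case j of E5 \<Rightarrow> 2 * D (ev E1) E1 | _ \<Rightarrow> 0)"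
    using d5b z b4 by (case_tac j, simp_all add: pi3_mult_def ev_def)
  show ?thesis
    using lin_expand[OF lin, of x] v2 v3 v5 z b4 by (simp add: algebra_simps)
qed



lemma loc_at:
  assumes "pi3_local_derivation N"
  shows "\<exists>a1 a2 a3 a5 b3 b5. N v E1 = a1 * v E1 \<and>
         N v E2 = a2 * v E1 + 2 * a1 * v E2 \<and>
         N v E3 = a3 * v E1 + 2 * a2 * v E2 + 3 * a1 * v E3 + b3 * v E4 \<and>
         N v E4 = a1 * v E4 \<and>
         N v E5 = a5 * v E1 + b5 * v E4 + 2 * a1 * v E5"
proof -
  obtain D where "pi3_derivation D" "N v = D v" using assms unfolding pi3_local_derivation_def by blast
  thus ?thesis using der_formula[of D v] by metis
qed

definition nf :: "(pi3 \<Rightarrow> pi3) \<Rightarrow> bool" where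
  "nf N \<longleftrightarrow> (\<forall>x. N x E1 = N (ev E1) E1 * x E1 \<and>
         N x E2 = N (ev E1) E2 * x E1 + 2 * N (ev E1) E1 * x E2 \<and>
         N x E3 = N (ev E1) E3 * x E1 + N (ev E2) E3 * x E2 + 3 * N (ev E1) E1 * x E3
                  + N (ev E4) E3 * x E4 \<and>
         N x E4 = N (ev E1) E1 * x E4 \<and>
         N x E5 = N (ev E1) E5 * x E1 + N (ev E4) E5 * x E4 + 2 * N (ev E1) E1 * x E5)"

lemma loc_nf:
  assumes loc: "pi3_local_derivation N"
  shows "nf N"
proof -
  have lin: "pi3_linear N" using loc unfolding pi3_local_derivation_def by blast
  have c1: "N (ev E1) E4 = 0"
    using loc_at[OF loc, of "ev E1"] by (auto simp: ev_apply)
  have c2: "N (ev E2) E1 = 0 \<and> N (ev E2) E4 = 0 \<and> N (ev E2) E5 = 0"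
    using loc_at[OF loc, of "ev E2"] by (auto simp: ev_apply)
  have c3: "N (ev E3) E1 = 0 \<and> N (ev E3) E2 = 0 \<and> N (ev E3) E4 = 0 \<and> N (ev E3) E5 = 0"
    using loc_at[OF loc, of "ev E3"] by (auto simp: ev_apply)
  have c4: "N (ev E4) E1 = 0 \<and> N (ev E4) E2 = 0"
    using loc_at[OF loc, of "ev E4"] by (auto simp: ev_apply)
  have c5: "N (ev E5) E1 = 0 \<and> N (ev E5) E2 = 0 \<and> N (ev E5) E3 = 0 \<and> N (ev E5) E4 = 0"
    using loc_at[OF loc, of "ev E5"] by (auto simp: ev_apply)
  have s14: "N (ev E4) E4 = N (ev E1) E1"
    using loc_at[OF loc, of "\<lambda>i. ev E1 i + ev E4 i", unfolded lin_add[OF lin]] c1 c4 by (auto simp: ev_apply)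
  have s25: "N (ev E2) E2 = N (ev E5) E5"
    using loc_at[OF loc, of "\<lambda>i. ev E2 i + ev E5 i", unfolded lin_add[OF lin]] c2 c5 by (auto simp: ev_apply)
  have s35: "2 * N (ev E3) E3 = 3 * N (ev E5) E5"
    using loc_at[OF loc, of "\<lambda>i. ev E3 i + ev E5 i", unfolded lin_add[OF lin]] c3 c5 by (auto simp: ev_apply)
  have s24: "N (ev E2) E2 = 2 * N (ev E4) E4"
    using loc_at[OF loc, of "\<lambda>i. ev E2 i + ev E4 i", unfolded lin_add[OF lin]] c2 c4 by (auto simp: ev_apply)
  have dg0: "N (ev E4) E4 = N (ev E1) E1" "N (ev E2) E2 = 2 * N (ev E1) E1"
     "N (ev E5) E5 = 2 * N (ev E1) E1"
    using s14 s25 s35 s24 by auto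
  have "2 * N (ev E3) E3 = 2 * (3 * N (ev E1) E1)" using s35 dg0 by simp
  hence "N (ev E3) E3 = 3 * N (ev E1) E1" by simp
  note dg = dg0 this
  show ?thesis unfolding nf_def
  proof
    fix x
    show "N x E1 = N (ev E1) E1 * x E1 \<and>
         N x E2 = N (ev E1) E2 * x E1 + 2 * N (ev E1) E1 * x E2 \<and>
         N x E3 = N (ev E1) E3 * x E1 + N (ev E2) E3 * x E2 + 3 * N (ev E1) E1 * x E3
                  + N (ev E4) E3 * x E4 \<and>
         N x E4 = N (ev E1) E1 * x E4 \<and>
         N x E5 = N (ev E1) E5 * x E1 + N (ev E4) E5 * x E4 + 2 * N (ev E1) E1 * x E5"
      using lin_expand[OF lin, of x] c1 c2 c3 c4 c5 dg
      by (simp add: algebra_simps)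
  qed
qed


definition form :: "complex \<Rightarrow> complex \<Rightarrow> complex \<Rightarrow> complex \<Rightarrow> complex \<Rightarrow> complex \<Rightarrow> complex
   \<Rightarrow> (pi3 \<Rightarrow> pi3) \<Rightarrow> bool" where
  "form t p21 p31 p32 p34 p51 p54 N \<longleftrightarrow> (\<forall>x. N x E1 = t * x E1 \<and>
         N x E2 = p21 * x E1 + 2 * t * x E2 \<and>
         N x E3 = p31 * x E1 + p32 * x E2 + 3 * t * x E3 + p34 * x E4 \<and>
         N x E4 = t * x E4 \<and>
         N x E5 = p51 * x E1 + p54 * x E4 + 2 * t * x E5)"

lemma nf_form: "nf N \<Longrightarrow> \<exists>t p21 p31 p32 p34 p51 p54. form t p21 p31 p32 p34 p51 p54 N"
  unfolding nf_def form_def by blast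

definition mkD :: "complex \<Rightarrow> complex \<Rightarrow> complex \<Rightarrow> complex \<Rightarrow> complex \<Rightarrow> complex \<Rightarrow> pi3 \<Rightarrow> pi3" where
  "mkD a1 a2 a3 a5 b3 b5 x = (\<lambda>i. case i of
       E1 \<Rightarrow> a1 * x E1
     | E2 \<Rightarrow> a2 * x E1 + 2 * a1 * x E2
     | E3 \<Rightarrow> a3 * x E1 + 2 * a2 * x E2 + 3 * a1 * x E3 + b3 * x E4
     | E4 \<Rightarrow> a1 * x E4
     | E5 \<Rightarrow> a5 * x E1 + b5 * x E4 + 2 * a1 * x E5)"

lemma mkD_der: "pi3_derivation (mkD a1 a2 a3 a5 b3 b5)"
  unfolding pi3_derivation_def pi3_linear_def
  by (simp add: fun_eq_iff mkD_def pi3_mult_def algebra_simps split: basis.split)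

lemma suff:
  assumes lin: "pi3_linear B" and f: "form t p21 p31 p32 p34 p51 p54 B"
  shows "pi3_local_derivation B"
  unfolding pi3_local_derivation_def
proof (intro conjI allI lin)
  fix x
  show "\<exists>D. pi3_derivation D \<and> B x = D x"
  proof (cases "x E1 = 0")
    case True
    have "B x = mkD t (p32 / 2) p31 p51 p34 p54 x"
      using f True unfolding form_def
      by (simp add: fun_eq_iff mkD_def split: basis.split)
    thus ?thesis using mkD_der by blast
  next
    case False
    have "B x = mkD t p21 (p31 + (p32 - 2 * p21) * x E2 / x E1) p51 p34 p54 x"
      using f False unfolding form_def
      by (simp add: fun_eq_iff mkD_def field_simps split: basis.split)
    thus ?thesis using mkD_der by blast
  qed
qed

lemma bracket_lin:
  assumes "pi3_linear N" "pi3_linear M"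
  shows "pi3_linear (pi3_bracket N M)"
  unfolding pi3_linear_def pi3_bracket_def
  by (simp add: lin_add[OF assms(1)] lin_add[OF assms(2)] lin_smul[OF assms(1)] lin_smul[OF assms(2)]
      algebra_simps)

theorem theorem6p1:
  assumes "pi3_local_derivation N" and "pi3_local_derivation M"
  shows "pi3_local_derivation (pi3_bracket N M)"
proof -
  have linN: "pi3_linear N" and linM: "pi3_linear M"
    using assms unfolding pi3_local_derivation_def by auto
  obtain t p21 p31 p32 p34 p51 p54 where fN: "form t p21 p31 p32 p34 p51 p54 N"
    using nf_form[OF loc_nf[OF assms(1)]] by blast
  obtain u q21 q31 q32 q34 q51 q54 where fM: "form u q21 q31 q32 q34 q51 q54 M"
    using nf_form[OF loc_nf[OF assms(2)]] by blast
  have "form 0 (t * q21 - u * p21) (2 * (t * q31 - u * p31) + p32 * q21 - q32 * p21)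
      (t * q32 - u * p32) (2 * (t * q34 - u * p34)) (t * q51 - u * p51) (t * q54 - u * p54)
      (pi3_bracket N M)"
    using fN fM unfolding form_def pi3_bracket_def by (simp add: algebra_simps)
  thus ?thesis using suff bracket_lin[OF linN linM] by blast
qed

end
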